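(* Assume in addition the convexity condition: $\big(\partial_a+[(1-\alpha)\mathcal{A}(0)+\alpha\mathcal{A}(u)],\gamma_0\big)\in\mathrm{Isom}(\mathbb{E}_1,\mathbb{E}_0\times E_\varsigma)$ for all $u\in\Sigma_1$ and $\alpha\in[0,1]$. Then for all $(\lambda,u)\in\mathbb{R}\times\Sigma_1$ and $\alpha\in[0,1]$, the operator $(1-\alpha)F_u(\lambda,0)+\alpha F_u(\lambda,u)\in\mathcal{L}(\mathbb{E}_1)$ is Fredholm of index zero.
   Context: $E_0$ is a real Banach space ordered by a closed convex cone $E_0^+$, $E_1$ a Banach space densely and compactly embedded in $E_0$. Fix $p\in(1,\infty)$, $\varsigma:=1-1/p$, $E_\varsigma:=(E_0,E_1)_{\varsigma,p}$ (real interpolation); for $\theta\in(0,1)\setminus\{\varsigma\}$, $E_\theta:=(E_0,E_1)_\theta$ with an admissible interpolation functor ($E_1$ dense in $E_\theta$), $E_\theta^+:=E_\theta\cap E_0^+$, and $\mathrm{int}(E_\varsigma^+)\neq\emptyset$. $a_m\in(0,\infty]$, $J:=[0,a_m)$, $\mathbb{E}_0:=L_p(J,E_0)$, $\mathbb{E}_1:=L_p(J,E_1)\cap W^1_p(J,E_0)$, $\gamma_0u:=u(0)$, $\gamma_0\in\mathcal{L}(\mathbb{E}_1,E_\varsigma)$, $\mathbb{E}_1^+:=L_p^+(J,E_1)\cap W_p^1(J,E_0)$. $\mathbb{F}$ is a Banach space with $\mathbb{E}_1$ compactly embedded in $\mathbb{F}$, $\Sigma$ an open connected $0$-neighbourhood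 in $\mathbb{F}$, $\Sigma_1:=\Sigma\cap\mathbb{E}_1$. For some $\vartheta\in(\varsigma,1]$: $\mathcal{A}\in C^1(\Sigma,\mathcal{L}(\mathbb{E}_1,\mathbb{E}_0))$, $\ell\in C^1(\Sigma,\mathcal{L}(\mathbb{E}_1,E_\vartheta))$. Standing assumptions: for all $u\in\Sigma_1$, $(\partial_a+\mathcal{A}(u),\gamma_0)\in\mathrm{Isom}(\mathbb{E}_1,\mathbb{E}_0\times E_\varsigma)$ with inverse $T[u]$, and $T[u](0,\cdot)$ maps $E_\varsigma^+$ into $\mathbb{E}_1^+$; $Q(u):=\ell(u)T[u](0,\cdot)$; $\lambda_0^{-1}>0$ is a simple eigenvalue of $Q(0)$ with an eigenvector $\Phi_0\in\mathrm{int}(E_\varsigma^+)$, and $Q(0)$ has no other eigenvalue with eigenvector in $E_\varsigma^+$. $S:=T[0]$ and $F(\lambda,u):=u-S\big((\mathcal{A}(0)-\mathcal{A}(u))u,\lambda\ell(u)u\big)$ for $(\lambda,u)\in\mathbb{R}\times\Sigma_1$; $F_u$ is its Fréchet derivative in $u$. *)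

theory Defs
  imports "HOL-Analysis.Analysis"
begin

definition isom :: "('a::real_normed_vector \<Rightarrow> 'b::real_normed_vector) \<Rightarrow> bool" where
  "isom T \<longleftrightarrow> bounded_linear T \<and> bij T \<and> bounded_linear (inv T)"

definition compact_op :: "('a::real_normed_vector \<Rightarrow> 'b::real_normed_vector) \<Rightarrow> bool" where
  "compact_op T \<longleftrightarrow> bounded_linear T \<and> (\<forall>B. bounded B \<longrightarrow> compact (closure (T ` B)))"

definition compact_embedding :: "('a::real_normed_vector \<Rightarrow> 'b::real_normed_vector) \<Rightarrow> bool" where
  "compact_embedding i \<longleftrightarrow> compact_op i \<and> inj i"

definition fredholm_index_zero :: "('a::banach \<Rightarrow> 'a) \<Rightarrow> bool" where
  "fredholm_index_zero T \<longleftrightarrow> bounded_linear T \<and> closed (range T) \<and>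
     (\<exists>B C. finite B \<and> independent B \<and> span B = {x. T x = 0} \<and>
            finite C \<and> independent C \<and> span C \<inter> range T = {0} \<and>
            span C + range T = UNIV \<and> card B = card C)"

text \<open>Here \<iota> embeds the parabolic space E1 into F and j embeds
  E_\<vartheta> into E_\<varsigma>.\<close>
definition S_op :: "('e1::real_normed_vector \<Rightarrow>\<^sub>L 'e0::real_normed_vector) \<Rightarrow> ('e1 \<Rightarrow>\<^sub>L 'es::real_normed_vector)
     \<Rightarrow> ('f \<Rightarrow> ('e1 \<Rightarrow>\<^sub>L 'e0)) \<Rightarrow> ('f::real_normed_vector) \<Rightarrow> ('e0 \<times> 'es \<Rightarrow> 'e1)" where
  "S_op D \<gamma>0 A z = inv (\<lambda>h. (D h + A z h, \<gamma>0 h))"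

definition F_map :: "('e1::real_normed_vector \<Rightarrow>\<^sub>L 'e0::real_normed_vector) \<Rightarrow> ('e1 \<Rightarrow>\<^sub>L 'es::real_normed_vector)
     \<Rightarrow> ('f::real_normed_vector \<Rightarrow> ('e1 \<Rightarrow>\<^sub>L 'e0)) \<Rightarrow> ('f \<Rightarrow> ('e1 \<Rightarrow>\<^sub>L 'et::real_normed_vector))
     \<Rightarrow> ('e1 \<Rightarrow> 'f) \<Rightarrow> ('et \<Rightarrow> 'es) \<Rightarrow> real \<Rightarrow> 'e1 \<Rightarrow> 'e1" where
  "F_map D \<gamma>0 A l \<iota> j lam u =
     u - S_op D \<gamma>0 A 0 ((A 0 - A (\<iota> u)) u, lam *\<^sub>R j (l (\<iota> u) u))"

end

theory Submission
  imports Defs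
begin


lemma compact_op_bl: "compact_op K \<Longrightarrow> bounded_linear K"
  by (simp add: compact_op_def)

lemma compact_closure_sub:
  fixes X :: "'a::metric_space set"
  assumes "X \<subseteq> C" "compact C" shows "compact (closure X)"
proof -
  have "closure X \<subseteq> C" using assms by (meson closure_minimal compact_imp_closed)
  then have "closure X = C \<inter> closure X" by blast
  then show ?thesis using compact_Int_closed[OF assms(2), of "closure X"] by simp
qed

lemma compact_op_seq:
  fixes x :: "nat \<Rightarrow> 'a::real_normed_vector"
  assumes K: "compact_op K" and x: "\<And>n. norm (x n) \<le> M"
  shows "\<exists>l r. strict_mono r \<and> (\<lambda>n. K (x (r n))) \<longlonglongrightarrow> l"
proof -
  have "bounded (range x)" unfolding bounded_iff using x by blast
  then have c: "compact (closure (K ` range x))" using K unfolding compact_op_def by blast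
  have mem: "\<forall>n. K (x n) \<in> closure (K ` range x)" by (intro allI closure_subset[THEN subsetD] imageI rangeI)
  have sc: "seq_compact (closure (K ` range x))" by (rule compact_imp_seq_compact[OF c])
  obtain l r where "l \<in> closure (K ` range x)" "strict_mono r" "((\<lambda>n. K (x n)) \<circ> r) \<longlonglongrightarrow> l"
    by (rule seq_compactE[of _ "\<lambda>n. K (x n)", OF sc mem])
  then show ?thesis by (auto simp: o_def)
qed

lemma compact_op_comp_left:
  fixes K :: "'a::real_normed_vector \<Rightarrow> 'b::real_normed_vector" and L :: "'b \<Rightarrow> 'c::real_normed_vector"
  assumes L: "bounded_linear L" and K: "compact_op K"
  shows "compact_op (\<lambda>x. L (K x))"
  unfolding compact_op_def
proof safe
  show "bounded_linear (\<lambda>x. L (K x))"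
    using bounded_linear_compose[OF L compact_op_bl[OF K]] by simp
  fix B :: "'a set" assume "bounded B"
  then have c: "compact (closure (K ` B))" using K unfolding compact_op_def by blast
  have "(\<lambda>x. L (K x)) ` B \<subseteq> L ` closure (K ` B)"
  proof (rule image_subsetI)
    fix b assume "b \<in> B" then have "K b \<in> closure (K ` B)" by (intro closure_subset[THEN subsetD] imageI)
    then show "L (K b) \<in> L ` closure (K ` B)" by (rule imageI)
  qed
  moreover have "compact (L ` closure (K ` B))"
    by (rule compact_continuous_image[OF linear_continuous_on[OF L] c])
  ultimately show "compact (closure ((\<lambda>x. L (K x)) ` B))" by (rule compact_closure_sub)
qed

lemma compact_op_comp_right:
  fixes L :: "'a::real_normed_vector \<Rightarrow> 'b::real_normed_vector" and K :: "'b \<Rightarrow> 'c::real_normed_vector"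
  assumes L: "bounded_linear L" and K: "compact_op K"
  shows "compact_op (\<lambda>x. K (L x))"
  unfolding compact_op_def
proof safe
  show "bounded_linear (\<lambda>x. K (L x))"
    using bounded_linear_compose[OF compact_op_bl[OF K] L] by simp
  fix B :: "'a set" assume "bounded B"
  then have "bounded (L ` B)" using bounded_linear_image L by blast
  then have "compact (closure (K ` (L ` B)))" using K unfolding compact_op_def by blast
  then show "compact (closure ((\<lambda>x. K (L x)) ` B))" by (simp add: image_image)
qed

lemma compact_op_add:
  fixes K1 K2 :: "'a::real_normed_vector \<Rightarrow> 'b::real_normed_vector"
  assumes K1: "compact_op K1" and K2: "compact_op K2"
  shows "compact_op (\<lambda>x. K1 x + K2 x)"
  unfolding compact_op_def
proof safe
  show "bounded_linear (\<lambda>x. K1 x + K2 x)"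
    using bounded_linear_add[OF compact_op_bl[OF K1] compact_op_bl[OF K2]] by simp
  fix B :: "'a set" assume "bounded B"
  then have c1: "compact (closure (K1 ` B))" and c2: "compact (closure (K2 ` B))"
    using K1 K2 unfolding compact_op_def by blast+
  have "(\<lambda>x. K1 x + K2 x) ` B \<subseteq> {x + y |x y. x \<in> closure (K1 ` B) \<and> y \<in> closure (K2 ` B)}"
  proof (rule image_subsetI)
    fix b assume "b \<in> B" then have "K1 b \<in> closure (K1 ` B)" "K2 b \<in> closure (K2 ` B)" by (intro closure_subset[THEN subsetD] imageI; simp)+
    then show "K1 b + K2 b \<in> {x + y |x y. x \<in> closure (K1 ` B) \<and> y \<in> closure (K2 ` B)}" by blast
  qed
  then show "compact (closure ((\<lambda>x. K1 x + K2 x) ` B))"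
    using compact_closure_sub compact_sums[OF c1 c2] by blast
qed

lemma compact_op_pair:
  fixes K1 :: "'a::real_normed_vector \<Rightarrow> 'b::real_normed_vector" and K2 :: "'a \<Rightarrow> 'c::real_normed_vector"
  assumes K1: "compact_op K1" and K2: "compact_op K2"
  shows "compact_op (\<lambda>x. (K1 x, K2 x))"
  unfolding compact_op_def
proof safe
  show "bounded_linear (\<lambda>x. (K1 x, K2 x))"
    using bounded_linear_Pair[OF compact_op_bl[OF K1] compact_op_bl[OF K2]] by simp
  fix B :: "'a set" assume "bounded B"
  then have c1: "compact (closure (K1 ` B))" and c2: "compact (closure (K2 ` B))"
    using K1 K2 unfolding compact_op_def by blast+
  have "(\<lambda>x. (K1 x, K2 x)) ` B \<subseteq> closure (K1 ` B) \<times> closure (K2 ` B)"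
  proof (rule image_subsetI)
    fix b assume "b \<in> B" then have "K1 b \<in> closure (K1 ` B)" "K2 b \<in> closure (K2 ` B)" by (intro closure_subset[THEN subsetD] imageI; simp)+
    then show "(K1 b, K2 b) \<in> closure (K1 ` B) \<times> closure (K2 ` B)" by blast
  qed
  then show "compact (closure ((\<lambda>x. (K1 x, K2 x)) ` B))"
    using compact_closure_sub compact_Times[OF c1 c2] by blast
qed

lemma compact_op_zero: "compact_op (\<lambda>x::'a::real_normed_vector. 0::'b::real_normed_vector)"
  unfolding compact_op_def
proof safe
  show "bounded_linear (\<lambda>x. 0)" by (rule bounded_linear_zero)
  fix B :: "'a set"
  show "compact (closure ((\<lambda>x. 0::'b) ` B))"
  proof (rule compact_closure_sub[of _ "{0}"])
    show "(\<lambda>x. 0::'b) ` B \<subseteq> {0}" by blast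
  qed simp
qed

lemma compact_op_scaleR: "compact_op K \<Longrightarrow> compact_op (\<lambda>x. c *\<^sub>R K x)"
  by (rule compact_op_comp_left[OF bounded_linear_scaleR_right])

lemma compact_op_minus: "compact_op K1 \<Longrightarrow> compact_op K2 \<Longrightarrow> compact_op (\<lambda>x. K1 x - K2 x)"
proof -
  assume a: "compact_op K1" "compact_op K2"
  have "compact_op (\<lambda>x. K1 x + (-1) *\<^sub>R K2 x)" by (rule compact_op_add[OF a(1) compact_op_scaleR[OF a(2)]])
  then show ?thesis by simp
qed

lemma compact_op_sep:
  fixes x :: "nat \<Rightarrow> 'a::real_normed_vector"
  assumes K: "compact_op K" and x: "\<And>n. norm (x n) \<le> M" and e: "e > 0"
    and sep: "\<And>m n. m < n \<Longrightarrow> norm (K (x m) - K (x n)) \<ge> e"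
  shows False
proof -
  obtain l r where r: "strict_mono r" and lim: "(\<lambda>n. K (x (r n))) \<longlonglongrightarrow> l"
    using compact_op_seq[of K x M] K x by blast
  have "Cauchy (\<lambda>n. K (x (r n)))" using lim by (rule LIMSEQ_imp_Cauchy)
  from CauchyD[OF this e] obtain N where N0: "\<forall>m\<ge>N. \<forall>n\<ge>N. norm (K (x (r m)) - K (x (r n))) < e"
    by (elim exE)
  have "r N < r (Suc N)" using r by (simp add: strict_mono_def)
  then have "norm (K (x (r N)) - K (x (r (Suc N)))) \<ge> e" by (rule sep)
  moreover have "norm (K (x (r N)) - K (x (r (Suc N)))) < e" using N0 by simp
  ultimately show False by simp
qed



lemma near_point:
  fixes N :: "'a::real_normed_vector set"
  assumes "closed N" "N \<noteq> {}"
  shows "\<exists>z\<in>N. norm (x - z) \<le> 2 * infdist x N"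
proof (cases "infdist x N = 0")
  case True
  then have "x \<in> N" using in_closed_iff_infdist_zero[OF assms] by blast
  then show ?thesis by (intro bexI[of _ x]) auto
next
  case False
  then have d: "infdist x N > 0" using infdist_nonneg[of x N] by linarith
  have bdd: "bdd_below ((\<lambda>a. dist x a) ` N)" by (rule bdd_belowI[of _ 0]) auto
  have "(INF a\<in>N. dist x a) < 2 * infdist x N" using d infdist_notempty[OF assms(2)] by simp
  then obtain z where "z \<in> N" "dist x z < 2 * infdist x N"
    using cINF_less_iff[OF assms(2) bdd] by blast
  then show ?thesis by (intro bexI[of _ z]) (auto simp: dist_norm)
qed

lemma riesz_lemma:
  fixes Y :: "'a::real_normed_vector set"
  assumes Y: "subspace Y" "closed Y" and z: "z \<notin> Y"
  shows "\<exists>x. x \<in> span (insert z Y) \<and> norm x = 1 \<and> (\<forall>y\<in>Y. norm (x - y) \<ge> 1/2)"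
proof -
  have ne: "Y \<noteq> {}" using Y(1) subspace_0 by blast
  define d where "d = infdist z Y"
  have d: "d > 0" unfolding d_def by (rule infdist_pos_not_in_closed[OF Y(2) ne z])
  obtain y0 where y0: "y0 \<in> Y" "norm (z - y0) \<le> 2 * d"
    using near_point[OF Y(2) ne, of z] unfolding d_def by blast
  define c where "c = norm (z - y0)"
  have "z - y0 \<noteq> 0" using y0(1) z by auto
  then have c: "c > 0" unfolding c_def by simp
  define x where "x = (1/c) *\<^sub>R (z - y0)"
  have "x \<in> span (insert z Y)" unfolding x_def
    by (intro span_scale span_diff span_base) (use y0 in auto)
  moreover have "norm x = 1" using c unfolding x_def c_def by simp
  moreover have "norm (x - y) \<ge> 1/2" if y: "y \<in> Y" for y
  proof -
    have "y0 + c *\<^sub>R y \<in> Y" using Y(1) y0(1) y by (simp add: subspace_add subspace_scale)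
    then have "d \<le> dist z (y0 + c *\<^sub>R y)" unfolding d_def by (rule infdist_le)
    also have "dist z (y0 + c *\<^sub>R y) = c * norm (x - y)"
    proof -
      have "z - (y0 + c *\<^sub>R y) = c *\<^sub>R (x - y)" using c unfolding x_def
        by (simp add: algebra_simps)
      then show ?thesis using c by (simp add: dist_norm)
    qed
    finally have "d \<le> c * norm (x - y)" .
    moreover have "c \<le> 2 * d" using y0(2) unfolding c_def .
    ultimately have "c \<le> 2 * (c * norm (x - y))" by linarith
    then show ?thesis using c by simp
  qed
  ultimately show ?thesis by blast
qed

lemma closed_span_finite:
  fixes S :: "'a::real_normed_vector set"
  assumes "finite S"
  shows "closed (span S)"
  using assms
proof (induction S rule: finite_induct)
  case empty
  then show ?case by simp
next
  case (insert b S)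
  show ?case
  proof (cases "b \<in> span S")
    case True
    then show ?thesis using insert.IH by (simp add: span_redundant)
  next
    case False
    have ne: "span S \<noteq> {}" using span_zero by blast
    define d where "d = infdist b (span S)"
    have d: "d > 0" unfolding d_def by (rule infdist_pos_not_in_closed[OF insert.IH ne False])
    have key: "\<bar>t\<bar> * d \<le> norm (t *\<^sub>R b + s)" if s: "s \<in> span S" for t s
    proof (cases "t = 0")
      case True then show ?thesis by simp
    next
      case False
      have "- ((1/t) *\<^sub>R s) \<in> span S" using s by (simp add: span_neg span_scale)
      then have "d \<le> dist b (- ((1/t) *\<^sub>R s))" unfolding d_def by (rule infdist_le)
      also have "dist b (- ((1/t) *\<^sub>R s)) = norm (t *\<^sub>R b + s) / \<bar>t\<bar>"
      proof -
        have "b - (- ((1/t) *\<^sub>R s)) = (1/t) *\<^sub>R (t *\<^sub>R b + s)" using False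
          by (simp add: algebra_simps)
        then show ?thesis by (simp add: dist_norm)
      qed
      finally show ?thesis using False by (simp add: field_simps)
    qed
    show ?thesis
      unfolding closed_sequential_limits
    proof (intro allI impI, elim conjE)
      fix y :: "nat \<Rightarrow> 'a" and l
      assume yin: "\<forall>n. y n \<in> span (insert b S)" and lim: "y \<longlonglongrightarrow> l"
      have "\<forall>n. \<exists>t. y n - t *\<^sub>R b \<in> span S" using yin by (simp add: span_insert)
      then obtain t where t: "\<And>n. y n - t n *\<^sub>R b \<in> span S" by metis
      obtain M where M: "\<And>n. norm (y n) \<le> M"
        using convergent_imp_bounded[OF lim] unfolding bounded_iff by blast
      have tb: "\<bar>t n\<bar> \<le> M / d" for n
      proof -
        have "\<bar>t n\<bar> * d \<le> norm (t n *\<^sub>R b + (y n - t n *\<^sub>R b))" by (rule key[OF t])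
        also have "\<dots> \<le> M" using M[of n] by simp
        finally show ?thesis using d by (simp add: field_simps)
      qed
      have "bounded (range t)" unfolding bounded_iff using tb by auto
      then obtain tl r where r: "strict_mono r" and tlim: "(t \<circ> r) \<longlonglongrightarrow> tl"
        using bounded_imp_convergent_subsequence by blast
      have ylim: "(\<lambda>n. y (r n) - t (r n) *\<^sub>R b) \<longlonglongrightarrow> l - tl *\<^sub>R b"
      proof (intro tendsto_intros)
        show "(\<lambda>n. y (r n)) \<longlonglongrightarrow> l" using LIMSEQ_subseq_LIMSEQ[OF lim r] by (simp add: o_def)
        show "(\<lambda>n. t (r n)) \<longlonglongrightarrow> tl" using tlim by (simp add: o_def)
      qed
      have "l - tl *\<^sub>R b \<in> span S"
        by (rule closed_sequentially[OF insert.IH _ ylim]) (rule t)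
      then show "l \<in> span (insert b S)" by (auto simp: span_insert)
    qed
  qed
qed



lemma finite_fixed_space:
  fixes K :: "'a::real_normed_vector \<Rightarrow> 'a"
  assumes K: "compact_op K" and N: "subspace N" and fx: "\<forall>x\<in>N. K x = x"
  shows "\<exists>B. finite B \<and> independent B \<and> span B = N"
proof (rule ccontr)
  assume nb: "\<not> (\<exists>B. finite B \<and> independent B \<and> span B = N)"
  have ext: "\<exists>z. z \<in> N \<and> z \<notin> span F" if F: "finite F" "F \<subseteq> N" for F
  proof (rule ccontr)
    assume "\<not> (\<exists>z. z \<in> N \<and> z \<notin> span F)"
    then have NF: "N \<subseteq> span F" by blast
    obtain B where B: "B \<subseteq> F" "independent B" "F \<subseteq> span B"
      by (rule maximal_independent_subset[of F])
    have "finite B" using B(1) F(1) by (rule finite_subset)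
    moreover have "span B = N"
    proof
      show "span B \<subseteq> N" using B(1) F(2) N by (intro span_minimal) auto
      show "N \<subseteq> span B" using NF span_minimal[OF B(3) subspace_span] by blast
    qed
    ultimately show False using nb B(2) by blast
  qed
  define nxt where "nxt F = (SOME z. z \<in> N \<and> z \<notin> span F)" for F
  define Bs where "Bs = rec_nat {} (\<lambda>n F. insert (nxt F) F)"
  have Bs0: "Bs 0 = {}" and BsS: "\<And>n. Bs (Suc n) = insert (nxt (Bs n)) (Bs n)"
    unfolding Bs_def by simp_all
  have inv: "finite (Bs n) \<and> Bs n \<subseteq> N \<and> nxt (Bs n) \<in> N \<and> nxt (Bs n) \<notin> span (Bs n)" for n
  proof (induction n)
    case 0
    have "\<exists>z. z \<in> N \<and> z \<notin> span (Bs 0)" using ext[of "Bs 0"] Bs0 by simp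
    then have "nxt (Bs 0) \<in> N \<and> nxt (Bs 0) \<notin> span (Bs 0)" unfolding nxt_def by (rule someI_ex)
    then show ?case using Bs0 by simp
  next
    case (Suc n)
    have fs: "finite (Bs (Suc n)) \<and> Bs (Suc n) \<subseteq> N" using Suc BsS[of n] by simp
    then have "\<exists>z. z \<in> N \<and> z \<notin> span (Bs (Suc n))" using ext by blast
    then have "nxt (Bs (Suc n)) \<in> N \<and> nxt (Bs (Suc n)) \<notin> span (Bs (Suc n))" unfolding nxt_def by (rule someI_ex)
    then show ?case using fs by simp
  qed
  have "\<exists>x. x \<in> span (Bs (Suc n)) \<and> norm x = 1 \<and> (\<forall>y\<in>span (Bs n). norm (x - y) \<ge> 1/2)" for n
  proof -
    have cl: "closed (span (Bs n))" using inv[of n] by (simp add: closed_span_finite)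
    obtain x where x: "x \<in> span (insert (nxt (Bs n)) (span (Bs n)))" "norm x = 1"
      "\<forall>y\<in>span (Bs n). norm (x - y) \<ge> 1/2"
      using riesz_lemma[OF subspace_span cl] inv[of n] by blast
    have "span (insert (nxt (Bs n)) (span (Bs n))) \<subseteq> span (Bs (Suc n))"
      unfolding BsS by (intro span_minimal) (auto intro: span_base span_mono[THEN subsetD, rotated])
    then show ?thesis using x by blast
  qed
  then obtain x where x: "\<And>n. x n \<in> span (Bs (Suc n))" "\<And>n. norm (x n) = 1"
    "\<And>n y. y \<in> span (Bs n) \<Longrightarrow> norm (x n - y) \<ge> 1/2"
    by metis
  have mono: "Bs m \<subseteq> Bs (m + k)" for m k
    by (induction k) (auto simp: BsS)
  have xN: "x n \<in> N" for n
  proof -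
    have "span (Bs (Suc n)) \<subseteq> N" using inv[of "Suc n"] N by (intro span_minimal) auto
    then show ?thesis using x(1) by blast
  qed
  show False
  proof (rule compact_op_sep[OF K, of x 1 "1/2"])
    show "norm (x n) \<le> 1" for n using x(2) by simp
    show "(0::real) < 1/2" by simp
    fix m n :: nat assume mn: "m < n"
    have "Bs (Suc m) \<subseteq> Bs n" using mono[of "Suc m" "n - Suc m"] mn by simp
    then have "x m \<in> span (Bs n)" using x(1) span_mono by blast
    then have "norm (x n - x m) \<ge> 1/2" by (rule x(3))
    then show "norm (K (x m) - K (x n)) \<ge> 1/2"
      using fx xN by (simp add: norm_minus_commute)
  qed
qed



lemma closed_range_compact:
  fixes K :: "'a::real_normed_vector \<Rightarrow> 'a"
  assumes K: "compact_op K"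
  shows "closed (range (\<lambda>x. x - K x))"
proof -
  define T where "T = (\<lambda>x. x - K x)"
  have blK: "bounded_linear K" by (rule compact_op_bl[OF K])
  have blT: "bounded_linear T" unfolding T_def by (intro bounded_linear_sub bounded_linear_ident blK)
  interpret T: bounded_linear T by (rule blT)
  define N where "N = {x. T x = 0}"
  have clN: "closed N" unfolding N_def
    by (intro closed_Collect_eq linear_continuous_on blT continuous_on_const)
  have neN: "N \<noteq> {}" unfolding N_def using T.zero by blast
  have subN: "subspace N" unfolding N_def subspace_def by (auto simp: T.add T.scaleR)
  have TKx: "x = T x + K x" for x unfolding T_def by simp
  have "l \<in> range T" if ys: "\<forall>n. ys n \<in> range T" and lim: "ys \<longlonglongrightarrow> l" for ys l
  proof -
    have "\<forall>n. \<exists>x. ys n = T x" using ys by blast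
    then obtain x where x: "\<And>n. ys n = T (x n)" by metis
    have "\<exists>z\<in>N. norm (x n - z) \<le> 2 * infdist (x n) N" for n by (rule near_point[OF clN neN])
    then obtain z where z: "\<And>n. z n \<in> N" "\<And>n. norm (x n - z n) \<le> 2 * infdist (x n) N" by metis
    define w where "w n = x n - z n" for n
    define dd where "dd n = infdist (x n) N" for n
    have Tw: "T (w n) = ys n" for n using z(1)[of n] x[of n] unfolding w_def N_def by (simp add: T.diff)
    have w1: "norm (w n) \<le> 2 * dd n" for n using z(2) unfolding w_def dd_def by simp
    have w2: "dd n \<le> norm (w n - a)" if "a \<in> N" for n a
    proof -
      have "z n + a \<in> N" using subN z(1) that by (simp add: subspace_add)
      then have "dd n \<le> dist (x n) (z n + a)" unfolding dd_def by (rule infdist_le)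
      then show ?thesis unfolding w_def by (simp add: dist_norm algebra_simps)
    qed
    obtain C where C: "\<And>n. norm (ys n) \<le> C"
      using convergent_imp_bounded[OF lim] unfolding bounded_iff by blast
    have bnd: "\<exists>M. \<forall>n. norm (w n) \<le> M"
    proof (rule ccontr)
      assume "\<not> (\<exists>M. \<forall>n. norm (w n) \<le> M)"
      then have "\<forall>k::nat. \<exists>n. norm (w n) > real (Suc k)" by (meson not_le)
      then obtain nk where nk: "\<And>k. norm (w (nk k)) > real (Suc k)" by metis
      define v where "v k = (1 / norm (w (nk k))) *\<^sub>R w (nk k)" for k
      have wpos: "norm (w (nk k)) > 0" for k using nk[of k] by linarith
      have nv: "norm (v k) = 1" for k using wpos[of k] unfolding v_def by simp
      have vsep: "norm (v k - a) \<ge> 1/2" if a: "a \<in> N" for k a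
      proof -
        have "norm (w (nk k)) *\<^sub>R a \<in> N" using subN a by (simp add: subspace_scale)
        then have "dd (nk k) \<le> norm (w (nk k) - norm (w (nk k)) *\<^sub>R a)" by (rule w2)
        also have "w (nk k) - norm (w (nk k)) *\<^sub>R a = norm (w (nk k)) *\<^sub>R (v k - a)"
          using wpos[of k] unfolding v_def by (simp add: algebra_simps)
        finally have "dd (nk k) \<le> norm (w (nk k)) * norm (v k - a)" by simp
        moreover have "norm (w (nk k)) \<le> 2 * dd (nk k)" by (rule w1)
        ultimately have "norm (w (nk k)) \<le> 2 * (norm (w (nk k)) * norm (v k - a))" by linarith
        then show ?thesis using wpos[of k] by simp
      qed
      have Tv: "(\<lambda>k. T (v k)) \<longlonglongrightarrow> 0"
      proof (rule Lim_null_comparison)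
        show "\<forall>\<^sub>F k in sequentially. norm (T (v k)) \<le> C * inverse (real (Suc k))"
        proof (rule always_eventually, rule allI)
          fix k
          have "T (v k) = (1 / norm (w (nk k))) *\<^sub>R ys (nk k)" unfolding v_def by (simp add: T.scaleR Tw)
          then have "norm (T (v k)) = norm (ys (nk k)) / norm (w (nk k))" using wpos[of k] by simp
          also have "\<dots> \<le> C / norm (w (nk k))" using C[of "nk k"] wpos[of k] by (simp add: divide_right_mono)
          also have "\<dots> \<le> C / real (Suc k)"
          proof -
            have "0 \<le> C" using C[of 0] norm_ge_zero order_trans by blast
            moreover have "0 < norm (w (nk k)) * real (Suc k)" using wpos[of k] by simp
            ultimately show ?thesis using nk[of k] by (intro divide_left_mono) auto
          qed
          finally show "norm (T (v k)) \<le> C * inverse (real (Suc k))" by (simp add: divide_inverse)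
        qed
        show "(\<lambda>k. C * inverse (real (Suc k))) \<longlonglongrightarrow> 0"
          by (rule tendsto_mult_right_zero[OF LIMSEQ_inverse_real_of_nat])
      qed
      obtain u r where r: "strict_mono r" and Kv: "(\<lambda>k. K (v (r k))) \<longlonglongrightarrow> u"
        using compact_op_seq[OF K, of v 1] nv by auto
      have Tvr: "(\<lambda>k. T (v (r k))) \<longlonglongrightarrow> 0" using LIMSEQ_subseq_LIMSEQ[OF Tv r] by (simp add: o_def)
      have vr: "(\<lambda>k. v (r k)) \<longlonglongrightarrow> u"
      proof -
        have "(\<lambda>k. T (v (r k)) + K (v (r k))) \<longlonglongrightarrow> 0 + u" by (intro tendsto_intros Tvr Kv)
        then show ?thesis by (simp flip: TKx)
      qed
      have "(\<lambda>k. T (v (r k))) \<longlonglongrightarrow> T u" by (rule T.tendsto[OF vr])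
      then have "T u = 0" using Tvr LIMSEQ_unique by blast
      then have uN: "u \<in> N" unfolding N_def by simp
      obtain k0 where "\<forall>k\<ge>k0. norm (v (r k) - u) < 1/2" using LIMSEQ_D[OF vr, of "1/2"] by auto
      then have "norm (v (r k0) - u) < 1/2" by simp
      moreover have "norm (v (r k0) - u) \<ge> 1/2" by (rule vsep[OF uN])
      ultimately show False by simp
    qed
    then obtain M where M: "\<And>n. norm (w n) \<le> M" by blast
    obtain u r where r: "strict_mono r" and Kw: "(\<lambda>k. K (w (r k))) \<longlonglongrightarrow> u"
      using compact_op_seq[OF K, of w M] M by auto
    have ysr: "(\<lambda>k. T (w (r k))) \<longlonglongrightarrow> l" using LIMSEQ_subseq_LIMSEQ[OF lim r] by (simp add: o_def Tw)
    have wr: "(\<lambda>k. w (r k)) \<longlonglongrightarrow> l + u"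
    proof -
      have "(\<lambda>k. T (w (r k)) + K (w (r k))) \<longlonglongrightarrow> l + u" by (intro tendsto_intros ysr Kw)
      then show ?thesis by (simp flip: TKx)
    qed
    have "(\<lambda>k. T (w (r k))) \<longlonglongrightarrow> T (l + u)" by (rule T.tendsto[OF wr])
    then have "T (l + u) = l" using ysr LIMSEQ_unique by blast
    then show ?thesis by (metis rangeI)
  qed
  then have "closed (range T)" unfolding closed_sequential_limits by blast
  then show ?thesis unfolding T_def .
qed



lemma span_disjoint:
  fixes A B :: "'a::real_vector set"
  assumes "finite B" "independent (A \<union> B)" "A \<inter> B = {}"
  shows "span A \<inter> span B = {0}"
  using assms
proof (induction B rule: finite_induct)
  case empty
  then show ?case by (auto simp: span_zero)
next
  case (insert b B)
  have indAB: "independent (A \<union> B)" using insert.prems(1) by (rule independent_mono) auto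
  have IH: "span A \<inter> span B = {0}" using insert.IH indAB insert.prems(2) by auto
  have bnot: "b \<notin> A \<union> B" using insert.hyps(2) insert.prems(2) by auto
  have "independent (insert b (A \<union> B))" using insert.prems(1) by simp
  then have bspan: "b \<notin> span (A \<union> B)" using bnot by (simp add: independent_insert)
  show ?case
  proof (intro equalityI subsetI)
    fix v assume v: "v \<in> span A \<inter> span (insert b B)"
    then obtain k where k: "v - k *\<^sub>R b \<in> span B" by (auto simp: span_insert)
    show "v \<in> {0}"
    proof (cases "k = 0")
      case True
      then show ?thesis using k v IH by auto
    next
      case False
      have "v \<in> span (A \<union> B)" using v span_mono[of A "A \<union> B"] by auto
      moreover have "v - k *\<^sub>R b \<in> span (A \<union> B)" using k span_mono[of B "A \<union> B"] by auto
      ultimately have "v - (v - k *\<^sub>R b) \<in> span (A \<union> B)" by (rule span_diff)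
      then have "k *\<^sub>R b \<in> span (A \<union> B)" by simp
      then have "(1/k) *\<^sub>R (k *\<^sub>R b) \<in> span (A \<union> B)" by (rule span_scale)
      then have "b \<in> span (A \<union> B)" using False by simp
      then show ?thesis using bspan by simp
    qed
  next
    fix v assume "v \<in> {0::'a}" then show "v \<in> span A \<inter> span (insert b B)" by (simp add: span_zero)
  qed
qed

lemma index_algebra:
  fixes T :: "'a::real_vector \<Rightarrow> 'a"
  assumes lin: "linear T"
    and Nm: "subspace Nm" and Rm: "subspace Rm"
    and NR: "Nm \<inter> Rm = {0}" and dec: "\<And>x. \<exists>a\<in>Nm. \<exists>b\<in>Rm. x = a + b"
    and Rran: "Rm \<subseteq> range T" and TN: "T ` Nm \<subseteq> Nm" and TR: "T ` Rm \<subseteq> Rm"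
    and kerN: "{x. T x = 0} \<subseteq> Nm"
    and BN0: "finite BN0" "span BN0 = Nm"
    and BK: "finite BK" "independent BK" "span BK = {x. T x = 0}"
  shows "\<exists>C. finite C \<and> independent C \<and> span C \<inter> range T = {0} \<and> span C + range T = UNIV \<and> card BK = card C"
proof -
  interpret T: linear T by (rule lin)
  have BKN: "BK \<subseteq> Nm" using BK(3) kerN span_superset by blast
  obtain BN where BN: "BK \<subseteq> BN" "BN \<subseteq> Nm" "independent BN" "Nm \<subseteq> span BN"
    by (rule maximal_independent_subset_extend[OF BKN BK(2)])
  have spBN: "span BN = Nm" using BN Nm span_minimal by blast
  have finBN: "finite BN" and cardBN: "card BN \<le> card BN0"
    using independent_span_bound[OF BN0(1) BN(3)] BN(2) BN0(2) by auto
  define U where "U = BN - BK"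
  have UBK: "U \<inter> BK = {}" and UBKun: "BK \<union> U = BN" using BN(1) unfolding U_def by auto
  have finU: "finite U" using finBN unfolding U_def by simp
  have indU: "independent U" using BN(3) unfolding U_def by (rule independent_mono) auto
  have disj1: "span BK \<inter> span U = {0}"
    by (rule span_disjoint[OF finU]) (use UBKun BN(3) UBK in auto)
  have injU: "inj_on T (span U)"
    unfolding linear_inj_on_iff_eq_0[OF lin subspace_span]
  proof (intro ballI impI)
    fix x assume "x \<in> span U" "T x = 0"
    then have "x \<in> span BK \<inter> span U" using BK(3) by auto
    then show "x = 0" using disj1 by auto
  qed
  have indTU: "independent (T ` U)" by (rule linear_independent_injective_image[OF lin indU injU])
  have injU': "inj_on T U" using injU span_superset inj_on_subset by blast
  have spTU: "span (T ` U) = T ` Nm"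
  proof -
    have "span (T ` U) = T ` span U" by (rule span_linear_image[OF lin])
    also have "\<dots> = T ` Nm"
    proof
      show "T ` span U \<subseteq> T ` Nm" using span_mono[of U BN] spBN unfolding U_def by auto
      show "T ` Nm \<subseteq> T ` span U"
      proof
        fix y assume "y \<in> T ` Nm"
        then obtain x where x: "x \<in> Nm" "y = T x" by blast
        then have "x \<in> span (BK \<union> U)" using spBN UBKun by simp
        then obtain a b where ab: "a \<in> span BK" "b \<in> span U" "x = a + b" unfolding span_Un by blast
        have "T a = 0" using ab(1) BK(3) by auto
        then have "y = T b" using x ab by (simp add: T.add)
        then show "y \<in> T ` span U" using ab(2) by blast
      qed
    qed
    finally show ?thesis .
  qed
  have TUN: "T ` U \<subseteq> Nm" using TN BN(2) unfolding U_def by blast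
  obtain BN' where BN': "T ` U \<subseteq> BN'" "BN' \<subseteq> Nm" "independent BN'" "Nm \<subseteq> span BN'"
    by (rule maximal_independent_subset_extend[OF TUN indTU])
  have spBN': "span BN' = Nm" using BN' Nm span_minimal by blast
  have finBN': "finite BN'" and c1: "card BN' \<le> card BN"
    using independent_span_bound[OF finBN BN'(3)] BN'(2) spBN by auto
  have c2: "card BN \<le> card BN'"
    using independent_span_bound[OF finBN' BN(3)] BN(2) spBN' by auto
  define C where "C = BN' - T ` U"
  have finC: "finite C" using finBN' unfolding C_def by simp
  have indC: "independent C" using BN'(3) unfolding C_def by (rule independent_mono) auto
  have CN: "span C \<subseteq> Nm" using BN'(2) Nm unfolding C_def by (intro span_minimal) auto
  have disj2: "span C \<inter> span (T ` U) = {0}"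
    by (rule span_disjoint) (use finBN' BN'(1,3) in \<open>auto simp: C_def Un_absorb2 finite_subset\<close>)
  have cardC: "card C = card BK"
  proof -
    have "card C = card BN' - card (T ` U)" unfolding C_def
      by (rule card_Diff_subset[OF finite_imageI[OF finU] BN'(1)])
    also have "card (T ` U) = card U" by (rule card_image[OF injU'])
    also have "card U = card BN - card BK" unfolding U_def by (rule card_Diff_subset[OF BK(1) BN(1)])
    finally show ?thesis using c1 c2 card_mono[OF finBN BN(1)] by simp
  qed
  have P1: "span C \<inter> range T = {0}"
  proof (intro equalityI subsetI)
    fix v assume v: "v \<in> span C \<inter> range T"
    then obtain x where x: "v = T x" by blast
    obtain a b where ab: "a \<in> Nm" "b \<in> Rm" "x = a + b" using dec[of x] by blast
    have Ta: "T a \<in> span (T ` U)" using ab(1) spTU by blast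
    have TaN: "T a \<in> Nm" using TN ab(1) by blast
    have Tb: "T b \<in> Rm" using TR ab(2) by blast
    have "T b = v - T a" using x ab by (simp add: T.add)
    moreover have "v - T a \<in> Nm" using v CN TaN Nm by (auto intro: subspace_diff)
    ultimately have "T b \<in> Nm \<inter> Rm" using Tb by simp
    then have "T b = 0" using NR by blast
    then have "v = T a" using x ab by (simp add: T.add)
    then have "v \<in> span C \<inter> span (T ` U)" using v Ta by simp
    then show "v \<in> {0}" using disj2 by blast
  next
    fix v assume "v \<in> {0::'a}" then show "v \<in> span C \<inter> range T"
      using span_zero T.zero by (metis IntI rangeI singletonD)
  qed
  have P2: "span C + range T = UNIV"
  proof (intro equalityI subsetI)
    fix x :: 'a
    obtain a b where ab: "a \<in> Nm" "b \<in> Rm" "x = a + b" using dec[of x] by blast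
    have "a \<in> span (C \<union> T ` U)" using ab(1) spBN' BN'(1) unfolding C_def by (simp add: Un_absorb2)
    then obtain c w where cw: "c \<in> span C" "w \<in> span (T ` U)" "a = c + w" unfolding span_Un by blast
    obtain w' where w': "w = T w'" using cw(2) spTU by blast
    obtain b' where b': "b = T b'" using ab(2) Rran by blast
    have "w + b = T (w' + b')" using w' b' by (simp add: T.add)
    then have "w + b \<in> range T" by blast
    moreover have "x = c + (w + b)" using ab cw by (simp add: algebra_simps)
    ultimately show "x \<in> span C + range T" using cw(1) by (auto intro: set_plus_intro)
  qed simp
  show ?thesis using finC indC P1 P2 cardC by (intro exI[of _ C]) simp
qed



lemma fredholm_I_minus_compact:
  fixes K :: "'a::banach \<Rightarrow> 'a"
  assumes K: "compact_op K"
  shows "fredholm_index_zero (\<lambda>x. x - K x)"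
proof -
  define T where "T = (\<lambda>x. x - K x)"
  have blK: "bounded_linear K" by (rule compact_op_bl[OF K])
  have blT: "bounded_linear T" unfolding T_def by (intro bounded_linear_sub bounded_linear_ident blK)
  interpret T: bounded_linear T by (rule blT)
  have blP: "bounded_linear (T ^^ n)" for n
    by (induction n) (simp_all add: bounded_linear_ident[unfolded id_def] bounded_linear_compose[OF blT] id_def)
  have linP: "linear (T ^^ n)" for n using blP[of n] bounded_linear.linear by blast
  have P0: "(T ^^ n) 0 = 0" for n using linP[of n] by (simp add: linear_0)
  define Kp where "Kp n = (\<lambda>x. x - (T ^^ n) x)" for n
  have Kp: "compact_op (Kp n)" for n
  proof (induction n)
    case 0
    then show ?case unfolding Kp_def using compact_op_zero by simp
  next
    case (Suc n)
    have "compact_op (\<lambda>x. Kp n x + K ((T ^^ n) x))"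
      by (rule compact_op_add[OF Suc compact_op_comp_right[OF blP K]])
    moreover have "Kp (Suc n) = (\<lambda>x. Kp n x + K ((T ^^ n) x))"
      unfolding Kp_def T_def by (auto simp: algebra_simps)
    ultimately show ?case by simp
  qed
  have Pform: "(T ^^ n) x = x - Kp n x" for n x unfolding Kp_def by simp
  define N where "N n = {x. (T ^^ n) x = 0}" for n
  define R where "R n = range (T ^^ n)" for n
  have subN: "subspace (N n)" for n
    unfolding N_def subspace_def using linP[of n] by (auto simp: linear_add linear_scale linear_0)
  have subR: "subspace (R n)" for n
    unfolding R_def using linear_subspace_image[OF linP subspace_UNIV] by blast
  have clN: "closed (N n)" for n unfolding N_def
    by (intro closed_Collect_eq linear_continuous_on blP continuous_on_const)
  have clR: "closed (R n)" for n
  proof -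
    have "R n = range (\<lambda>x. x - Kp n x)" unfolding R_def by (simp add: Pform)
    then show ?thesis using closed_range_compact[OF Kp] by simp
  qed
  have Padd: "(T ^^ (a + b)) x = (T ^^ a) ((T ^^ b) x)" for a b x by (simp add: funpow_add)
  have PSuc: "(T ^^ Suc n) x = T ((T ^^ n) x)" for n x by simp
  have PSuc': "(T ^^ Suc n) x = (T ^^ n) (T x)" for n x by (simp add: funpow_Suc_right del: funpow.simps)
  have Nmono: "a \<le> b \<Longrightarrow> N a \<subseteq> N b" for a b
  proof
    fix x assume ab: "a \<le> b" and x: "x \<in> N a"
    have "(T ^^ b) x = (T ^^ (b - a)) ((T ^^ a) x)" using Padd[of "b - a" a x] ab by simp
    then show "x \<in> N b" using x P0 unfolding N_def by simp
  qed
  have Rmono: "a \<le> b \<Longrightarrow> R b \<subseteq> R a" for a b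
  proof
    fix y assume ab: "a \<le> b" and y: "y \<in> R b"
    then obtain x where x: "y = (T ^^ b) x" unfolding R_def by blast
    have "(T ^^ b) x = (T ^^ a) ((T ^^ (b - a)) x)" using Padd[of a "b - a" x] ab by simp
    then show "y \<in> R a" using x unfolding R_def by blast
  qed
  have TN: "x \<in> N (Suc n) \<Longrightarrow> T x \<in> N n" for x n unfolding N_def using PSuc' by simp
  have TR: "T y \<in> R (Suc n)" if yR: "y \<in> R n" for y n
  proof -
    obtain z where "y = (T ^^ n) z" using yR unfolding R_def by blast
    then have "T y = (T ^^ Suc n) z" by simp
    then show ?thesis unfolding R_def by blast
  qed
  have TKx: "K x = x - T x" for x unfolding T_def by simp
  obtain p where p: "N p = N (Suc p)"
  proof (rule ccontr)
    assume "\<not> thesis"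
    then have ne: "N n \<noteq> N (Suc n)" for n using that by blast
    have "\<exists>x. x \<in> N (Suc n) \<and> norm x = 1 \<and> (\<forall>y\<in>N n. norm (x - y) \<ge> 1/2)" for n
    proof -
      obtain z where z: "z \<in> N (Suc n)" "z \<notin> N n" using ne[of n] Nmono[of n "Suc n"] by auto
      obtain x where x: "x \<in> span (insert z (N n))" "norm x = 1" "\<forall>y\<in>N n. norm (x - y) \<ge> 1/2"
        using riesz_lemma[OF subN clN z(2)] by blast
      have "span (insert z (N n)) \<subseteq> N (Suc n)"
        using z(1) Nmono[of n "Suc n"] subN by (intro span_minimal) auto
      then show ?thesis using x by blast
    qed
    then obtain x where x: "\<And>n. x n \<in> N (Suc n)" "\<And>n. norm (x n) = 1"
      "\<And>n y. y \<in> N n \<Longrightarrow> norm (x n - y) \<ge> 1/2" by metis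
    show False
    proof (rule compact_op_sep[OF K, of x 1 "1/2"])
      show "norm (x n) \<le> 1" for n using x(2) by simp
      show "(0::real) < 1/2" by simp
      fix m n :: nat assume mn: "m < n"
      have "T (x n) \<in> N n" using TN x(1) by blast
      moreover have "x m \<in> N n" using x(1)[of m] Nmono[of "Suc m" n] mn by auto
      moreover have "T (x m) \<in> N n" using TN[OF x(1)[of m]] Nmono[of m n] mn by auto
      ultimately have "T (x n) + x m - T (x m) \<in> N n" using subN[of n]
        by (intro subspace_diff subspace_add) auto
      then have "norm (x n - (T (x n) + x m - T (x m))) \<ge> 1/2" by (rule x(3))
      moreover have "K (x m) - K (x n) = - (x n - (T (x n) + x m - T (x m)))"
        unfolding TKx by (simp add: algebra_simps)
      ultimately show "norm (K (x m) - K (x n)) \<ge> 1/2" by (simp only: norm_minus_cancel)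
    qed
  qed
  obtain q where q: "R q = R (Suc q)"
  proof (rule ccontr)
    assume "\<not> thesis"
    then have ne: "R n \<noteq> R (Suc n)" for n using that by blast
    have "\<exists>x. x \<in> R n \<and> norm x = 1 \<and> (\<forall>y\<in>R (Suc n). norm (x - y) \<ge> 1/2)" for n
    proof -
      obtain z where z: "z \<in> R n" "z \<notin> R (Suc n)" using ne[of n] Rmono[of n "Suc n"] by auto
      obtain x where x: "x \<in> span (insert z (R (Suc n)))" "norm x = 1" "\<forall>y\<in>R (Suc n). norm (x - y) \<ge> 1/2"
        using riesz_lemma[OF subR clR z(2)] by blast
      have "span (insert z (R (Suc n))) \<subseteq> R n"
        using z(1) Rmono[of n "Suc n"] subR by (intro span_minimal) auto
      then show ?thesis using x by blast
    qed
    then obtain x where x: "\<And>n. x n \<in> R n" "\<And>n. norm (x n) = 1"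
      "\<And>n y. y \<in> R (Suc n) \<Longrightarrow> norm (x n - y) \<ge> 1/2" by metis
    show False
    proof (rule compact_op_sep[OF K, of x 1 "1/2"])
      show "norm (x n) \<le> 1" for n using x(2) by simp
      show "(0::real) < 1/2" by simp
      fix m n :: nat assume mn: "m < n"
      have "T (x m) \<in> R (Suc m)" using TR x(1) by blast
      moreover have "x n \<in> R (Suc m)" using x(1)[of n] Rmono[of "Suc m" n] mn by auto
      moreover have "T (x n) \<in> R (Suc m)" using TR[OF x(1)[of n]] Rmono[of "Suc m" "Suc n"] mn by auto
      ultimately have "T (x m) + x n - T (x n) \<in> R (Suc m)" using subR[of "Suc m"]
        by (intro subspace_diff subspace_add) auto
      then have "norm (x m - (T (x m) + x n - T (x n))) \<ge> 1/2" by (rule x(3))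
      moreover have "K (x m) - K (x n) = x m - (T (x m) + x n - T (x n))"
        unfolding TKx by (simp add: algebra_simps)
      ultimately show "norm (K (x m) - K (x n)) \<ge> 1/2" by simp
    qed
  qed
  have Nstab: "N (p + j) = N p" for j
  proof (induction j)
    case 0 then show ?case by simp
  next
    case (Suc j)
    show ?case
    proof
      show "N p \<subseteq> N (p + Suc j)" by (rule Nmono) simp
      show "N (p + Suc j) \<subseteq> N p"
      proof
        fix x assume x: "x \<in> N (p + Suc j)"
        have "(T ^^ (Suc p + j)) x = (T ^^ Suc p) ((T ^^ j) x)" by (rule Padd)
        then have "(T ^^ j) x \<in> N (Suc p)" using x unfolding N_def by simp
        then have "(T ^^ j) x \<in> N p" using p by simp
        then have "x \<in> N (p + j)" unfolding N_def using Padd[of p j x] by simp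
        then show "x \<in> N p" using Suc.IH by simp
      qed
    qed
  qed
  have Rstab: "R (q + j) = R q" for j
  proof (induction j)
    case 0 then show ?case by simp
  next
    case (Suc j)
    have e1: "(T ^^ (q + Suc j)) x = (T ^^ j) ((T ^^ Suc q) x)" for x
    proof -
      have "q + Suc j = j + Suc q" by simp
      then show ?thesis by (simp only: Padd)
    qed
    have e2: "(T ^^ (q + j)) x = (T ^^ j) ((T ^^ q) x)" for x
    proof -
      have "q + j = j + q" by simp
      then show ?thesis by (simp only: Padd)
    qed
    have "R (q + Suc j) = (T ^^ j) ` R (Suc q)"
      unfolding R_def e1 by (simp add: image_image)
    also have "\<dots> = (T ^^ j) ` R q" using q by simp
    also have "\<dots> = R (q + j)"
      unfolding R_def e2 by (simp add: image_image)
    finally show ?case using Suc.IH by simp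
  qed
  define m where "m = Suc (p + q)"
  have Nm2: "N (m + m) = N m"
    using Nstab[of "Suc q + m"] Nstab[of "Suc q"] unfolding m_def by (simp add: add.assoc)
  have Rm2: "R (m + m) = R m" and RmS: "R (Suc m) = R m"
    using Rstab[of "Suc p + m"] Rstab[of "Suc p"] Rstab[of "Suc (Suc p)"] unfolding m_def
    by (simp_all add: add.commute add.left_commute)
  have NR: "N m \<inter> R m = {0}"
  proof (intro equalityI subsetI)
    fix x assume x: "x \<in> N m \<inter> R m"
    then obtain y where y: "x = (T ^^ m) y" unfolding R_def by blast
    have "(T ^^ (m + m)) y = 0" using x y Padd[of m m y] unfolding N_def by simp
    then have "y \<in> N m" using Nm2 unfolding N_def by blast
    then show "x \<in> {0}" using y unfolding N_def by simp
  next
    fix x assume "x \<in> {0::'a}" then show "x \<in> N m \<inter> R m"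
      using subN subR subspace_0 by blast
  qed
  have dec: "\<exists>a\<in>N m. \<exists>b\<in>R m. x = a + b" for x
  proof -
    have "(T ^^ m) x \<in> R (m + m)" using Rm2 unfolding R_def by blast
    then obtain y where y: "(T ^^ m) x = (T ^^ (m + m)) y" unfolding R_def by blast
    have "(T ^^ m) (x - (T ^^ m) y) = 0" using y Padd[of m m y] linP[of m] by (simp add: linear_diff)
    then have "x - (T ^^ m) y \<in> N m" unfolding N_def by simp
    moreover have "(T ^^ m) y \<in> R m" unfolding R_def by blast
    ultimately show ?thesis by (intro bexI[of _ "x - (T ^^ m) y"] bexI[of _ "(T ^^ m) y"]) auto
  qed
  have Rran: "R m \<subseteq> range T" unfolding R_def m_def using PSuc by (auto simp del: funpow.simps)
  have TNm: "T ` N m \<subseteq> N m"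
  proof (rule image_subsetI)
    fix x assume "x \<in> N m" then have "x \<in> N (Suc m)" using Nmono[of m "Suc m"] by auto
    then show "T x \<in> N m" by (rule TN)
  qed
  have TRm: "T ` R m \<subseteq> R m" using TR RmS by blast
  have kerN: "{x. T x = 0} \<subseteq> N m" using Nmono[of 1 m] unfolding N_def m_def by auto
  obtain BN0 where BN0: "finite BN0" "independent BN0" "span BN0 = N m"
  proof -
    have "\<forall>x\<in>N m. Kp m x = x" unfolding N_def Kp_def by simp
    then show ?thesis using finite_fixed_space[OF Kp subN] that by blast
  qed
  obtain BK where BK: "finite BK" "independent BK" "span BK = {x. T x = 0}"
  proof -
    have sub: "subspace {x. T x = 0}" unfolding subspace_def by (auto simp: T.add T.scaleR)
    have "\<forall>x\<in>{x. T x = 0}. K x = x" unfolding T_def by simp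
    then show ?thesis using finite_fixed_space[OF K sub] that by blast
  qed
  obtain C where C: "finite C" "independent C" "span C \<inter> range T = {0}" "span C + range T = UNIV" "card BK = card C"
    using index_algebra[OF T.linear subN subR NR dec Rran TNm TRm kerN BN0(1,3) BK] by blast
  have "closed (range T)" using closed_range_compact[OF K] unfolding T_def .
  then have "fredholm_index_zero T"
    unfolding fredholm_index_zero_def using blT BK C by blast
  then show ?thesis unfolding T_def .
qed



lemma isom_inv: "isom P \<Longrightarrow> isom (inv P)"
  unfolding isom_def by (simp add: bij_imp_bij_inv inv_inv_eq)

lemma isom_comp:
  assumes "isom P" "isom Q" shows "isom (\<lambda>x. P (Q x))"
proof -
  have e: "(\<lambda>x. P (Q x)) = P \<circ> Q" by (simp add: o_def)
  have bP: "bij P" and bQ: "bij Q" using assms unfolding isom_def by auto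
  have "inv (P \<circ> Q) = inv Q \<circ> inv P" by (rule o_inv_distrib[OF bP bQ])
  moreover have "bij (P \<circ> Q)" by (rule bij_comp[OF bQ bP])
  ultimately show ?thesis using assms unfolding isom_def e
    by (auto simp: o_def intro: bounded_linear_compose)
qed

lemma image_set_plus_linear:
  assumes "linear P" shows "P ` (X + Y) = P ` X + P ` Y"
proof -
  interpret linear P by (rule assms)
  show ?thesis
  proof
    show "P ` (X + Y) \<subseteq> P ` X + P ` Y"
      by (auto simp: set_plus_def add) blast
    show "P ` X + P ` Y \<subseteq> P ` (X + Y)"
    proof
      fix z assume "z \<in> P ` X + P ` Y"
      then obtain a b where ab: "a \<in> X" "b \<in> Y" "z = P a + P b" by (auto simp: set_plus_def)
      then have "z = P (a + b)" by (simp add: add)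
      moreover have "a + b \<in> X + Y" using ab by (auto intro: set_plus_intro)
      ultimately show "z \<in> P ` (X + Y)" by blast
    qed
  qed
qed

lemma fredholm_isom_comp:
  fixes T P :: "'a::banach \<Rightarrow> 'a"
  assumes F: "fredholm_index_zero T" and P: "isom P"
  shows "fredholm_index_zero (\<lambda>x. P (T x))"
proof -
  have blT: "bounded_linear T" using F unfolding fredholm_index_zero_def by blast
  have blP: "bounded_linear P" and bP: "bij P" and blI: "bounded_linear (inv P)" using P unfolding isom_def by auto
  have linP: "linear P" using blP bounded_linear.linear by blast
  have injP: "inj P" using bP bij_is_inj by blast
  have P0: "P 0 = 0" using linP linear_0 by blast
  obtain B C where BC: "finite B" "independent B" "span B = {x. T x = 0}" "finite C" "independent C"
    "span C \<inter> range T = {0}" "span C + range T = UNIV" "card B = card C"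
    using F unfolding fredholm_index_zero_def by blast
  have clT: "closed (range T)" using F unfolding fredholm_index_zero_def by blast
  have rng: "range (\<lambda>x. P (T x)) = P ` range T" by auto
  have "P ` range T = inv P -` range T"
  proof
    show "P ` range T \<subseteq> inv P -` range T" using injP by (auto simp: inv_f_f)
    show "inv P -` range T \<subseteq> P ` range T"
    proof
      fix y assume "y \<in> inv P -` range T"
      then have "inv P y \<in> range T" by simp
      moreover have "P (inv P y) = y" using bP by (simp add: bij_is_surj surj_f_inv_f)
      ultimately show "y \<in> P ` range T" by (metis imageI)
    qed
  qed
  then have cl: "closed (range (\<lambda>x. P (T x)))"
    unfolding rng using closed_vimage[OF clT linear_continuous_on[OF blI]] by simp
  have ker: "{x. P (T x) = 0} = {x. T x = 0}" using injP P0 by (metis inj_eq)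
  have injC: "inj_on P (span C)" using injP inj_on_subset by blast
  have "P ` (span C \<inter> range T) = P ` span C \<inter> P ` range T" by (rule image_Int[OF injP])
  then have i1: "span (P ` C) \<inter> range (\<lambda>x. P (T x)) = {0}"
    unfolding span_linear_image[OF linP] rng using BC(6) P0 by simp
  have "P ` (span C + range T) = P ` span C + P ` range T" by (rule image_set_plus_linear[OF linP])
  then have i2: "span (P ` C) + range (\<lambda>x. P (T x)) = UNIV"
    unfolding span_linear_image[OF linP] rng using BC(7) bP by (simp add: bij_is_surj)
  show ?thesis unfolding fredholm_index_zero_def
    using bounded_linear_compose[OF blP blT] cl ker BC(1-3,8) i1 i2
      linear_independent_injective_image[OF linP BC(5) injC] card_image[OF inj_on_subset[OF injP]] BC(4)
    by (intro conjI exI[of _ B] exI[of _ "P ` C"]) auto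
qed

lemma fredholm_isom_minus_compact:
  fixes P K :: "'a::banach \<Rightarrow> 'a"
  assumes P: "isom P" and K: "compact_op K"
  shows "fredholm_index_zero (\<lambda>x. P x - K x)"
proof -
  have blI: "bounded_linear (inv P)" and bP: "bij P" and blP: "bounded_linear P" using P unfolding isom_def by auto
  have K': "compact_op (\<lambda>x. inv P (K x))" by (rule compact_op_comp_left[OF blI K])
  have "fredholm_index_zero (\<lambda>x. P (x - inv P (K x)))"
    by (rule fredholm_isom_comp[OF fredholm_I_minus_compact[OF K'] P])
  moreover have "P (x - inv P (K x)) = P x - K x" for x
    using bP by (simp add: linear_diff[OF bounded_linear.linear[OF blP]] bij_is_surj surj_f_inv_f)
  ultimately show ?thesis by simp
qed



lemma Fmap_deriv:
  fixes \<iota> :: "'E1::banach \<Rightarrow> 'F::banach"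
    and j :: "'Et::banach \<Rightarrow> 'Es::banach"
    and D :: "'E1 \<Rightarrow>\<^sub>L 'E0::banach"
    and \<gamma>0 :: "'E1 \<Rightarrow>\<^sub>L 'Es"
    and A :: "'F \<Rightarrow> ('E1 \<Rightarrow>\<^sub>L 'E0)"
    and A' :: "'F \<Rightarrow> ('F \<Rightarrow>\<^sub>L ('E1 \<Rightarrow>\<^sub>L 'E0))"
    and l :: "'F \<Rightarrow> ('E1 \<Rightarrow>\<^sub>L 'Et)"
    and l' :: "'F \<Rightarrow> ('F \<Rightarrow>\<^sub>L ('E1 \<Rightarrow>\<^sub>L 'Et))"
  assumes ib: "bounded_linear \<iota>" and jb: "bounded_linear j"
    and Sb: "bounded_linear (S_op D \<gamma>0 A 0)"
    and dA: "(A has_derivative blinfun_apply (A' (\<iota> u0))) (at (\<iota> u0))"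
    and dl: "(l has_derivative blinfun_apply (l' (\<iota> u0))) (at (\<iota> u0))"
  shows "(F_map D \<gamma>0 A l \<iota> j lam has_derivative
     (\<lambda>h. h - S_op D \<gamma>0 A 0 ((A 0 - A (\<iota> u0)) h + (0 - A' (\<iota> u0) (\<iota> h)) u0,
                               lam *\<^sub>R j (l (\<iota> u0) h + l' (\<iota> u0) (\<iota> h) u0)))) (at u0)"
proof -
  have di: "(\<iota> has_derivative \<iota>) (at u0)" by (rule bounded_linear_imp_has_derivative[OF ib])
  have dAi: "((\<lambda>u. A (\<iota> u)) has_derivative (\<lambda>h. A' (\<iota> u0) (\<iota> h))) (at u0)"
    by (rule has_derivative_compose[OF di dA])
  have dli: "((\<lambda>u. l (\<iota> u)) has_derivative (\<lambda>h. l' (\<iota> u0) (\<iota> h))) (at u0)"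
    by (rule has_derivative_compose[OF di dl])
  have dA2: "((\<lambda>u. A 0 - A (\<iota> u)) has_derivative (\<lambda>h. 0 - A' (\<iota> u0) (\<iota> h))) (at u0)"
    by (rule has_derivative_diff[OF has_derivative_const dAi])
  have d1: "((\<lambda>u. (A 0 - A (\<iota> u)) u) has_derivative
      (\<lambda>h. (A 0 - A (\<iota> u0)) h + (0 - A' (\<iota> u0) (\<iota> h)) u0)) (at u0)"
    by (rule bounded_bilinear.FDERIV[OF bounded_bilinear_blinfun_apply dA2 has_derivative_ident])
  have d2: "((\<lambda>u. l (\<iota> u) u) has_derivative
      (\<lambda>h. l (\<iota> u0) h + l' (\<iota> u0) (\<iota> h) u0)) (at u0)"
    by (rule bounded_bilinear.FDERIV[OF bounded_bilinear_blinfun_apply dli has_derivative_ident])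
  have d3: "((\<lambda>u. lam *\<^sub>R j (l (\<iota> u) u)) has_derivative
      (\<lambda>h. lam *\<^sub>R j (l (\<iota> u0) h + l' (\<iota> u0) (\<iota> h) u0))) (at u0)"
    by (rule has_derivative_scaleR_right[OF bounded_linear.has_derivative[OF jb d2]])
  have d4: "((\<lambda>u. S_op D \<gamma>0 A 0 ((A 0 - A (\<iota> u)) u, lam *\<^sub>R j (l (\<iota> u) u))) has_derivative
      (\<lambda>h. S_op D \<gamma>0 A 0 ((A 0 - A (\<iota> u0)) h + (0 - A' (\<iota> u0) (\<iota> h)) u0,
                               lam *\<^sub>R j (l (\<iota> u0) h + l' (\<iota> u0) (\<iota> h) u0)))) (at u0)"
    by (rule bounded_linear.has_derivative[OF Sb has_derivative_Pair[OF d1 d3]])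
  show ?thesis unfolding F_map_def
    by (rule has_derivative_diff[OF has_derivative_ident d4])
qed

lemma cpt_term:
  fixes \<iota> :: "'E1::real_normed_vector \<Rightarrow> 'F::real_normed_vector"
    and B :: "'F \<Rightarrow>\<^sub>L ('E1 \<Rightarrow>\<^sub>L 'E0::real_normed_vector)"
  assumes "compact_op \<iota>"
  shows "compact_op (\<lambda>h. blinfun_apply (0 - blinfun_apply B (\<iota> h)) w)"
proof -
  have "bounded_linear (\<lambda>y. blinfun_apply (blinfun_apply B y) w)"
    by (rule bounded_linear_compose[OF blinfun.bounded_linear_left blinfun.bounded_linear_right])
  then have "bounded_linear (\<lambda>y. - blinfun_apply (blinfun_apply B y) w)" by (rule bounded_linear_minus)
  then have "compact_op (\<lambda>h. - blinfun_apply (blinfun_apply B (\<iota> h)) w)"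
    by (rule compact_op_comp_left[OF _ assms])
  then show ?thesis by (simp add: blinfun.diff_left blinfun.minus_left)
qed

lemma bl_term:
  fixes \<iota> :: "'E1::real_normed_vector \<Rightarrow> 'F::real_normed_vector"
    and B :: "'F \<Rightarrow>\<^sub>L ('E1 \<Rightarrow>\<^sub>L 'Et::real_normed_vector)"
  assumes "bounded_linear \<iota>"
  shows "bounded_linear (\<lambda>h. blinfun_apply C h + blinfun_apply (blinfun_apply B (\<iota> h)) w)"
proof -
  have "bounded_linear (\<lambda>y. blinfun_apply (blinfun_apply B y) w)"
    by (rule bounded_linear_compose[OF blinfun.bounded_linear_left blinfun.bounded_linear_right])
  then have "bounded_linear (\<lambda>h. blinfun_apply (blinfun_apply B (\<iota> h)) w)"
    using bounded_linear_compose[OF _ assms] by blast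
  then show ?thesis by (intro bounded_linear_add blinfun.bounded_linear_right)
qed



theorem lemma3p2:
  fixes \<iota> :: "'E1::banach \<Rightarrow> 'F::banach"
    and j :: "'Et::banach \<Rightarrow> 'Es::banach"
    and D :: "'E1 \<Rightarrow>\<^sub>L 'E0::banach"
    and \<gamma>0 :: "'E1 \<Rightarrow>\<^sub>L 'Es"
    and \<Sigma> :: "'F set"
    and A :: "'F \<Rightarrow> ('E1 \<Rightarrow>\<^sub>L 'E0)"
    and A' :: "'F \<Rightarrow> ('F \<Rightarrow>\<^sub>L ('E1 \<Rightarrow>\<^sub>L 'E0))"
    and l :: "'F \<Rightarrow> ('E1 \<Rightarrow>\<^sub>L 'Et)"
    and l' :: "'F \<Rightarrow> ('F \<Rightarrow>\<^sub>L ('E1 \<Rightarrow>\<^sub>L 'Et))"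
  assumes emb_F: "compact_embedding \<iota>"
    and emb_theta: "compact_embedding j"
    and Sigma_open: "open \<Sigma>" and Sigma_conn: "connected \<Sigma>" and Sigma_0: "0 \<in> \<Sigma>"
    and A_deriv: "\<forall>z\<in>\<Sigma>. (A has_derivative blinfun_apply (A' z)) (at z)"
    and A'_cont: "continuous_on \<Sigma> A'"
    and l_deriv: "\<forall>z\<in>\<Sigma>. (l has_derivative blinfun_apply (l' z)) (at z)"
    and l'_cont: "continuous_on \<Sigma> l'"
    and convexity: "\<forall>u. \<iota> u \<in> \<Sigma> \<longrightarrow> (\<forall>\<alpha>\<in>{0..1::real}.
          isom (\<lambda>h. (D h + ((1 - \<alpha>) *\<^sub>R A 0 + \<alpha> *\<^sub>R A (\<iota> u)) h, \<gamma>0 h)))"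
  shows "\<forall>lam::real. \<forall>u. \<iota> u \<in> \<Sigma> \<longrightarrow> (\<forall>\<alpha>\<in>{0..1::real}.
           (\<exists>F0 F1. (F_map D \<gamma>0 A l \<iota> j lam has_derivative F0) (at 0) \<and>
                    (F_map D \<gamma>0 A l \<iota> j lam has_derivative F1) (at u) \<and>
                    fredholm_index_zero (\<lambda>h. (1 - \<alpha>) *\<^sub>R F0 h + \<alpha> *\<^sub>R F1 h)))"
proof (intro allI impI ballI)
  fix lam :: real and u \<alpha>
  assume u: "\<iota> u \<in> \<Sigma>" and \<alpha>: "\<alpha> \<in> {0..1::real}"
  have ic: "compact_op \<iota>" using emb_F unfolding compact_embedding_def by blast
  have ib: "bounded_linear \<iota>" using ic unfolding compact_op_def by blast
  have i0: "\<iota> 0 = 0" using ib by (simp add: linear_0 bounded_linear.linear)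
  have jc: "compact_op j" using emb_theta unfolding compact_embedding_def by blast
  have jb: "bounded_linear j" using jc unfolding compact_op_def by blast
  define M0 where "M0 = (\<lambda>h. (D h + A 0 h, \<gamma>0 h))"
  define Ma where "Ma = (\<lambda>h. (D h + ((1 - \<alpha>) *\<^sub>R A 0 + \<alpha> *\<^sub>R A (\<iota> u)) h, \<gamma>0 h))"
  have cu: "\<forall>\<alpha>\<in>{0..1::real}. isom (\<lambda>h. (D h + ((1 - \<alpha>) *\<^sub>R A 0 + \<alpha> *\<^sub>R A (\<iota> u)) h, \<gamma>0 h))"
    using convexity u by blast
  have "isom (\<lambda>h. (D h + ((1 - 0) *\<^sub>R A 0 + 0 *\<^sub>R A (\<iota> u)) h, \<gamma>0 h))"
    using cu by (rule bspec) simp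
  then have M0i: "isom M0" unfolding M0_def by simp
  have Mai: "isom Ma" unfolding Ma_def using convexity u \<alpha> by blast
  define S where "S = S_op D \<gamma>0 A 0"
  have SM0: "S = inv M0" unfolding S_def S_op_def M0_def by simp
  have Si: "isom S" unfolding SM0 by (rule isom_inv[OF M0i])
  have Sb: "bounded_linear S" using Si unfolding isom_def by blast
  have Sl: "linear S" using Sb bounded_linear.linear by blast
  have SM0h: "S (M0 h) = h" for h using M0i unfolding SM0 isom_def by (simp add: bij_is_inj inv_f_f)
  define DG where "DG z h = ((A 0 - A (\<iota> z)) h + (0 - A' (\<iota> z) (\<iota> h)) z,
                               lam *\<^sub>R j (l (\<iota> z) h + l' (\<iota> z) (\<iota> h) z))" for z h
  define F0 where "F0 h = h - S (DG 0 h)" for h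
  define F1 where "F1 h = h - S (DG u h)" for h
  have dF0: "(F_map D \<gamma>0 A l \<iota> j lam has_derivative F0) (at 0)"
  proof -
    have "(F_map D \<gamma>0 A l \<iota> j lam has_derivative
     (\<lambda>h. h - S_op D \<gamma>0 A 0 ((A 0 - A (\<iota> 0)) h + (0 - A' (\<iota> 0) (\<iota> h)) 0,
                               lam *\<^sub>R j (l (\<iota> 0) h + l' (\<iota> 0) (\<iota> h) 0)))) (at 0)"
      by (rule Fmap_deriv[OF ib jb Sb[unfolded S_def]]) (use A_deriv l_deriv Sigma_0 i0 in auto)
    then show ?thesis unfolding F0_def DG_def S_def .
  qed
  have dF1: "(F_map D \<gamma>0 A l \<iota> j lam has_derivative F1) (at u)"
  proof -
    have "(F_map D \<gamma>0 A l \<iota> j lam has_derivative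
     (\<lambda>h. h - S_op D \<gamma>0 A 0 ((A 0 - A (\<iota> u)) h + (0 - A' (\<iota> u) (\<iota> h)) u,
                               lam *\<^sub>R j (l (\<iota> u) h + l' (\<iota> u) (\<iota> h) u)))) (at u)"
      by (rule Fmap_deriv[OF ib jb Sb[unfolded S_def]]) (use A_deriv l_deriv u in auto)
    then show ?thesis unfolding F1_def DG_def S_def .
  qed
  define Kc where "Kc h = (\<alpha> *\<^sub>R (0 - A' (\<iota> u) (\<iota> h)) u + (1 - \<alpha>) *\<^sub>R (0 - A' (\<iota> 0) (\<iota> h)) 0,
      (1 - \<alpha>) *\<^sub>R lam *\<^sub>R j (l (\<iota> 0) h + l' (\<iota> 0) (\<iota> h) 0)
        + \<alpha> *\<^sub>R lam *\<^sub>R j (l (\<iota> u) h + l' (\<iota> u) (\<iota> h) u))" for h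
  have key: "M0 h - ((1 - \<alpha>) *\<^sub>R DG 0 h + \<alpha> *\<^sub>R DG u h) = Ma h - Kc h" for h
    unfolding M0_def Ma_def DG_def Kc_def i0
    by (simp add: prod_eq_iff blinfun.add_left blinfun.diff_left blinfun.scaleR_left algebra_simps)
  have Lh: "(1 - \<alpha>) *\<^sub>R F0 h + \<alpha> *\<^sub>R F1 h = S (Ma h) - S (Kc h)" for h
  proof -
    have "(1 - \<alpha>) *\<^sub>R F0 h + \<alpha> *\<^sub>R F1 h = S (M0 h) - S ((1 - \<alpha>) *\<^sub>R DG 0 h + \<alpha> *\<^sub>R DG u h)"
    proof -
      have "S ((1 - \<alpha>) *\<^sub>R DG 0 h + \<alpha> *\<^sub>R DG u h) = (1 - \<alpha>) *\<^sub>R S (DG 0 h) + \<alpha> *\<^sub>R S (DG u h)"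
        by (simp only: linear_add[OF Sl] linear_scale[OF Sl])
      then show ?thesis unfolding F0_def F1_def SM0h by (simp add: algebra_simps)
    qed
    also have "\<dots> = S (M0 h - ((1 - \<alpha>) *\<^sub>R DG 0 h + \<alpha> *\<^sub>R DG u h))" by (simp add: linear_diff[OF Sl])
    also have "\<dots> = S (Ma h - Kc h)" by (simp only: key)
    also have "\<dots> = S (Ma h) - S (Kc h)" by (simp add: linear_diff[OF Sl])
    finally show ?thesis .
  qed
  have Kc1: "compact_op (\<lambda>h. \<alpha> *\<^sub>R (0 - A' (\<iota> u) (\<iota> h)) u + (1 - \<alpha>) *\<^sub>R (0 - A' (\<iota> 0) (\<iota> h)) 0)"
    by (intro compact_op_add compact_op_scaleR cpt_term ic)
  have Kc2: "compact_op (\<lambda>h. (1 - \<alpha>) *\<^sub>R lam *\<^sub>R j (l (\<iota> 0) h + l' (\<iota> 0) (\<iota> h) 0)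
        + \<alpha> *\<^sub>R lam *\<^sub>R j (l (\<iota> u) h + l' (\<iota> u) (\<iota> h) u))"
    by (intro compact_op_add compact_op_scaleR compact_op_comp_right[OF _ jc] bl_term ib)
  have Kcc: "compact_op Kc" unfolding Kc_def by (rule compact_op_pair[OF Kc1 Kc2])
  have K2: "compact_op (\<lambda>h. S (Kc h))" by (rule compact_op_comp_left[OF Sb Kcc])
  have Pi: "isom (\<lambda>h. S (Ma h))" by (rule isom_comp[OF Si Mai])
  have "fredholm_index_zero (\<lambda>h. S (Ma h) - S (Kc h))" by (rule fredholm_isom_minus_compact[OF Pi K2])
  then have "fredholm_index_zero (\<lambda>h. (1 - \<alpha>) *\<^sub>R F0 h + \<alpha> *\<^sub>R F1 h)" by (simp only: Lh)
  then show "\<exists>F0 F1. (F_map D \<gamma>0 A l \<iota> j lam has_derivative F0) (at 0) \<and>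
                    (F_map D \<gamma>0 A l \<iota> j lam has_derivative F1) (at u) \<and>
                    fredholm_index_zero (\<lambda>h. (1 - \<alpha>) *\<^sub>R F0 h + \<alpha> *\<^sub>R F1 h)"
    using dF0 dF1 by blast
qed


end
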